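(* Let $n\ge 1$, $\nu>0$, and let $\alpha_u,\alpha_y\ge 0$ with $\max\{\alpha_u,\alpha_y\}>0$. Let $M\in\mathbb{R}^{n\times n}$ be diagonal with positive diagonal entries and $L\in\mathbb{R}^{n\times n}$. Let $\mathcal{A}_k\subseteq\{1,\dots,n\}$ and let $\Pi_k$ be the diagonal matrix with $(\Pi_k)_{ii}=1$ if $i\in\mathcal{A}_k$ and $0$ otherwise. Set $\gamma_1=\frac{\alpha_y^2\nu}{\alpha_y^2\nu+\alpha_u^2}$, $\gamma_2=\frac{\alpha_u^2}{\alpha_y^2\nu+\alpha_u^2}$, $$\mathbb{S}_k=\nu LM^{-1}L^T+M-\frac{1}{\alpha_y^2\nu+\alpha_u^2}(\alpha_y\nu LM^{-1}-\alpha_u I)\Pi_k M\Pi_k(\alpha_y\nu LM^{-1}-\alpha_u I)^T,$$ $L_1=\sqrt{\nu}L(I-\gamma_1\Pi_k)^{1/2}+(I-\gamma_2\Pi_k)^{1/2}M$ and $\widehat{\mathbb{S}}_k=L_1M^{-1}L_1^T$. If $\mathcal{A}_k=\{1,\dots,n\}$, then $\widehat{\mathbb{S}}_k=\mathbb{S}_k$.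
   Context: Square roots of nonnegative diagonal matrices are taken entrywise. *)

theory Defs
  imports "HOL-Analysis.Analysis"
begin

definition sel_mat :: "'n::finite set \<Rightarrow> real^'n^'n" where
  "sel_mat A = (\<chi> i j. if i = j \<and> i \<in> A then 1 else 0)"

text \<open>Entrywise square root (used for nonnegative diagonal matrices).\<close>
definition diag_sqrt :: "real^'n^'n \<Rightarrow> real^'n^'n" where
  "diag_sqrt D = (\<chi> i j. sqrt (D $ i $ j))"

definition is_diag :: "real^'n^'n \<Rightarrow> bool" where
  "is_diag D \<longleftrightarrow> (\<forall>i j. i \<noteq> j \<longrightarrow> D $ i $ j = 0)"

end

theory Submission
  imports Defs
begin

lemma mr_add: "((A::real^'m^'n) + B) ** C = A ** C + B ** C"
  by (vector matrix_matrix_mult_def sum.distrib[symmetric] field_simps)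
lemma mr_diff: "((A::real^'m^'n) - B) ** C = A ** C - B ** C"
  by (vector matrix_matrix_mult_def sum_subtractf[symmetric] field_simps)
lemma ml_diff: "(A::real^'m^'n) ** (B - C) = A ** B - A ** C"
  by (vector matrix_matrix_mult_def sum_subtractf[symmetric] field_simps)
lemma tr_add: "transpose ((A::real^'m^'n) + B) = transpose A + transpose B"
  by (simp add: transpose_def vec_eq_iff)
lemma tr_diff: "transpose ((A::real^'m^'n) - B) = transpose A - transpose B"
  by (simp add: transpose_def vec_eq_iff)
lemma sc_l: "(k *\<^sub>R (A::real^'m^'n)) ** B = k *\<^sub>R (A ** B)"
  by (simp add: scalar_matrix_assoc)
lemma sc_r: "(A::real^'m^'n) ** (k *\<^sub>R B) = k *\<^sub>R (A ** B)"
  by (simp add: matrix_scalar_ac scalar_matrix_assoc)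
lemma sel_univ: "sel_mat (UNIV::'n::finite set) = mat 1"
  by (simp add: sel_mat_def mat_def vec_eq_iff)
lemma dsq: "c \<le> 1 \<Longrightarrow> diag_sqrt (mat 1 - c *\<^sub>R mat 1 :: real^'n^'n) = sqrt (1 - c) *\<^sub>R mat 1"
  by (simp add: diag_sqrt_def mat_def vec_eq_iff)


lemma diag_inv:
  fixes M :: "real^'n^'n"
  assumes "is_diag M" "\<forall>i. M $ i $ i > 0"
  shows "matrix_inv M = (\<chi> i j. if i = j then 1 / M$i$i else 0)"
    "transpose M = M"
    "M ** matrix_inv M = mat 1" "matrix_inv M ** M = mat 1"
    "transpose (matrix_inv M) = matrix_inv M"
proof -
  define D :: "real^'n^'n" where "D = (\<chi> i j. if i = j then 1 / M$i$i else 0)"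
  have off: "i \<noteq> j \<Longrightarrow> M $ i $ j = 0" for i j using assms(1) by (auto simp: is_diag_def)
  have nz: "M$i$i \<noteq> 0" for i using assms(2) by (metis less_irrefl)
  have 1: "M ** D = mat 1"
  proof -
    have "(M ** D) $ i $ j = M$i$j / M$j$j" for i j
      unfolding matrix_matrix_mult_def D_def by (simp add: if_distrib if_distribR sum.delta' cong: if_cong)
    then show ?thesis using off assms(2) unfolding mat_def vec_eq_iff
      by (auto simp: nz)
  qed
  have 2: "D ** M = mat 1"
  proof -
    have "(D ** M) $ i $ j = M$i$j / M$i$i" for i j
      unfolding matrix_matrix_mult_def D_def by (simp add: if_distrib if_distribR sum.delta cong: if_cong)
    then show ?thesis using off assms(2) unfolding mat_def vec_eq_iff
      by (auto simp: nz)
  qed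
  have 3: "M ** matrix_inv M = mat 1 \<and> matrix_inv M ** M = mat 1"
    unfolding matrix_inv_def by (rule someI[of _ D]) (use 1 2 in auto)
  then have "matrix_inv M = matrix_inv M ** (M ** D)" using 1 by simp
  also have "\<dots> = D" by (simp add: matrix_mul_assoc 3)
  finally have 4: "matrix_inv M = D" by simp
  then show "transpose (matrix_inv M) = matrix_inv M"
    by (simp add: D_def transpose_def vec_eq_iff)
  show "M ** matrix_inv M = mat 1" "matrix_inv M ** M = mat 1" using 3 by auto
  from 4 show "matrix_inv M = (\<chi> i j. if i = j then 1 / M$i$i else 0)" by (simp add: D_def)
  show "transpose M = M" using off by (simp add: transpose_def vec_eq_iff) metis
qed

theorem corollary4p2:
  fixes M L :: "real^'n^'n" and A :: "'n set"
    and \<nu> \<alpha>u \<alpha>y \<gamma>1 \<gamma>2 :: real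
  assumes "\<nu> > 0" and "\<alpha>u \<ge> 0" and "\<alpha>y \<ge> 0" and "max \<alpha>u \<alpha>y > 0"
    and "is_diag M" and "\<forall>i. M $ i $ i > 0"
    and "\<gamma>1 = \<alpha>y^2 * \<nu> / (\<alpha>y^2 * \<nu> + \<alpha>u^2)"
    and "\<gamma>2 = \<alpha>u^2 / (\<alpha>y^2 * \<nu> + \<alpha>u^2)"
    and "A = UNIV"
  shows "(let Pi = sel_mat A; Mi = matrix_inv M;
              B = ((\<alpha>y * \<nu>) *\<^sub>R (L ** Mi)) - \<alpha>u *\<^sub>R mat 1;
              S = \<nu> *\<^sub>R (L ** Mi ** transpose L) + M
                  - (1 / (\<alpha>y^2 * \<nu> + \<alpha>u^2)) *\<^sub>R (B ** Pi ** M ** Pi ** transpose B);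
              L1 = sqrt \<nu> *\<^sub>R (L ** diag_sqrt (mat 1 - \<gamma>1 *\<^sub>R Pi))
                   + diag_sqrt (mat 1 - \<gamma>2 *\<^sub>R Pi) ** M
          in L1 ** Mi ** transpose L1 = S)"
proof -
  define D where "D = \<alpha>y^2 * \<nu> + \<alpha>u^2"
  have Dpos: "D > 0"
  proof (cases "\<alpha>y > 0")
    case True then show ?thesis using assms(1,2) unfolding D_def
      by (simp add: add_pos_nonneg)
  next
    case False then have "\<alpha>u > 0" using assms(3,4) by (auto simp: max_def split: if_splits)
    then show ?thesis using assms(1,3) unfolding D_def by (simp add: add_nonneg_pos)
  qed
  have g1: "\<gamma>1 = \<alpha>y^2 * \<nu> / D" and g2: "\<gamma>2 = \<alpha>u^2 / D" using assms(7,8) D_def by auto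
  have g12: "1 - \<gamma>1 = \<gamma>2" "1 - \<gamma>2 = \<gamma>1" using Dpos unfolding g1 g2 D_def by (auto simp: field_simps)
  have g1le: "\<gamma>1 \<le> 1" "\<gamma>2 \<le> 1" using Dpos assms(1) unfolding g1 g2 D_def by (auto simp: divide_le_eq_1)
  define Mi where "Mi = matrix_inv M"
  note di = diag_inv[OF assms(5,6), folded Mi_def]
  define a where "a = sqrt \<nu> * sqrt \<gamma>2"
  define b where "b = sqrt \<gamma>1"
  define c where "c = \<alpha>y * \<nu>"
  define X where "X = L ** Mi ** transpose L"
  have L1: "sqrt \<nu> *\<^sub>R (L ** diag_sqrt (mat 1 - \<gamma>1 *\<^sub>R mat 1))
                   + diag_sqrt (mat 1 - \<gamma>2 *\<^sub>R mat 1) ** M = a *\<^sub>R L + b *\<^sub>R M"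
    using g1le g12 by (simp add: dsq sc_l sc_r a_def b_def)
  have LMM: "L ** Mi ** M = L" by (simp add: di(4) flip: matrix_mul_assoc)
  have MML: "M ** (Mi ** transpose L) = transpose L" by (simp add: di(3) matrix_mul_assoc)
  have lhs: "(a *\<^sub>R L + b *\<^sub>R M) ** Mi ** transpose (a *\<^sub>R L + b *\<^sub>R M)
     = (a*a) *\<^sub>R X + (a*b) *\<^sub>R L + (a*b) *\<^sub>R transpose L + (b*b) *\<^sub>R M"
  proof -
    have e1: "(a *\<^sub>R L + b *\<^sub>R M) ** Mi = a *\<^sub>R (L ** Mi) + b *\<^sub>R mat 1"
      by (simp add: mr_add sc_l di(3))
    have e2: "transpose (a *\<^sub>R L + b *\<^sub>R M) = a *\<^sub>R transpose L + b *\<^sub>R M"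
      by (simp add: tr_add transpose_scalar di(2))
    show ?thesis unfolding e1 e2
      by (simp add: mr_add matrix_add_ldistrib sc_l sc_r LMM X_def algebra_simps)
  qed
  have tB: "transpose (c *\<^sub>R (L ** Mi) - \<alpha>u *\<^sub>R mat 1) = c *\<^sub>R (Mi ** transpose L) - \<alpha>u *\<^sub>R mat 1"
    by (simp add: tr_diff transpose_scalar matrix_transpose_mul di(5))
  have rhsB: "(c *\<^sub>R (L ** Mi) - \<alpha>u *\<^sub>R mat 1) ** mat 1 ** M ** mat 1 ** transpose (c *\<^sub>R (L ** Mi) - \<alpha>u *\<^sub>R mat 1)
     = (c*c) *\<^sub>R X - (c*\<alpha>u) *\<^sub>R L - (c*\<alpha>u) *\<^sub>R transpose L + (\<alpha>u*\<alpha>u) *\<^sub>R M"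
  proof -
    have e3: "(c *\<^sub>R (L ** Mi) - \<alpha>u *\<^sub>R mat 1) ** mat 1 ** M ** mat 1 = c *\<^sub>R L - \<alpha>u *\<^sub>R M"
      by (simp add: mr_diff sc_l LMM)
    show ?thesis unfolding tB e3
      by (simp add: mr_diff ml_diff sc_l sc_r X_def matrix_mul_assoc LMM di(3) algebra_simps)
  qed
  have nn: "\<alpha>u*(\<alpha>u*\<nu>) \<ge> 0" using assms(1,2) by simp
  have aa: "a*a = \<nu> - c*c/D" unfolding a_def c_def g2 using assms(1) Dpos nn
    by (simp add: real_sqrt_mult[symmetric] D_def field_simps power2_eq_square abs_of_nonneg)
  have bb: "b*b = 1 - \<alpha>u*\<alpha>u/D" unfolding b_def using g12 g1le Dpos assms(1,3)
    by (simp add: g2 power2_eq_square g1 divide_nonneg_pos)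
  have ab: "a*b = c*\<alpha>u/D"
  proof -
    have "a*b = sqrt ((c*\<alpha>u/D)^2)" unfolding a_def b_def c_def g1 g2
      by (simp add: real_sqrt_mult[symmetric] power2_eq_square field_simps)
    also have "\<dots> = c*\<alpha>u/D" using assms(1,2,3) Dpos unfolding c_def by simp
    finally show ?thesis .
  qed
  show ?thesis
    unfolding Let_def assms(9) sel_univ L1 Mi_def[symmetric] D_def[symmetric] c_def[symmetric]
    unfolding lhs X_def[symmetric] rhsB aa bb ab
    by (simp add: algebra_simps divide_inverse)
qed
end
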